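(* There exist absolute constants $c_1,c_2>0$ such that the following holds. Let $d\ge1$, $\delta>0$, and let $\varphi$ be a random vector in $\mathbb{S}^{d-1}$ for which there exist constants $\alpha\ge1$, $s>0$ with $\Pr(|\langle x,\varphi\rangle|\le t)\le\alpha t^s$ for all $0\le t\le1$ and all $x\in\mathbb{S}^{d-1}$. Let $\varphi_1,\dots,\varphi_N$ be i.i.d. copies of $\varphi$, and $\epsilon_1,\dots,\epsilon_N$ i.i.d. uniform on $[-\delta,\delta]$, independent of the $\varphi_n$; let $P_N=\bigcap_{n=1}^N\{u\in\mathbb{R}^d:|\langle u,\varphi_n\rangle-\epsilon_n|\le\delta\}$ and $W_N=\sup\{\|u\|:u\in P_N\}$. If $N\ge c_2\,d\,\ln\!\big(32(2\alpha)^{1/s}\big)$, then $$\mathbb{E}|W_N|^2\le\frac{c_1\delta^2d^2(2\alpha)^{2/s}\ln^2\!\big(16(2\alpha)^{1/s}\big)}{(N+1)(N+2)}.$$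
   Context: $W_N$ is the worst case error of consistent reconstruction from measurements $q_n=\langle x,\varphi_n\rangle+\epsilon_n$. *)

theory Defs
  imports "HOL-Probability.Probability"
begin

text \<open>Vectors of R^d are represented as (extensional) functions on the index set {..<d};
  the measurable space of R^d is the product of d copies of the Borel line.\<close>

definition Rd :: "nat \<Rightarrow> (nat \<Rightarrow> real) measure" where
  "Rd d = PiM {..<d} (\<lambda>_. (borel :: real measure))"

definition inner_d :: "nat \<Rightarrow> (nat \<Rightarrow> real) \<Rightarrow> (nat \<Rightarrow> real) \<Rightarrow> real" where
  "inner_d d u v = (\<Sum>i<d. u i * v i)"

definition norm_d :: "nat \<Rightarrow> (nat \<Rightarrow> real) \<Rightarrow> real" where
  "norm_d d u = sqrt (\<Sum>i<d. (u i)\<^sup>2)"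

definition sphere_d :: "nat \<Rightarrow> (nat \<Rightarrow> real) set" where
  "sphere_d d = {v \<in> space (Rd d). norm_d d v = 1}"

definition unif_noise :: "real \<Rightarrow> real measure" where
  "unif_noise \<delta> = uniform_measure lborel {-\<delta>..\<delta>}"

text \<open>Joint law of (phi_1,eps_1),...,(phi_N,eps_N): i.i.d. pairs, each pair with law
  mu (x) Unif[-delta,delta], i.e. phi_n i.i.d. copies of phi with law mu,
  eps_n i.i.d. uniform, and the eps independent of the phi.\<close>
definition sample_law :: "nat \<Rightarrow> (nat \<Rightarrow> real) measure \<Rightarrow> real \<Rightarrow>
    (nat \<Rightarrow> (nat \<Rightarrow> real) \<times> real) measure" where
  "sample_law N \<mu> \<delta> = PiM {..<N} (\<lambda>_. \<mu> \<Otimes>\<^sub>M unif_noise \<delta>)"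

text \<open>The consistent set P_N for a sample omega (omega n = (phi_n, eps_n)).\<close>
definition P_N :: "nat \<Rightarrow> nat \<Rightarrow> real \<Rightarrow> (nat \<Rightarrow> (nat \<Rightarrow> real) \<times> real) \<Rightarrow> (nat \<Rightarrow> real) set" where
  "P_N d N \<delta> \<omega> = {u \<in> space (Rd d). \<forall>n<N. \<bar>inner_d d u (fst (\<omega> n)) - snd (\<omega> n)\<bar> \<le> \<delta>}"

definition W_N :: "nat \<Rightarrow> nat \<Rightarrow> real \<Rightarrow> (nat \<Rightarrow> (nat \<Rightarrow> real) \<times> real) \<Rightarrow> ennreal" where
  "W_N d N \<delta> \<omega> = (SUP u \<in> P_N d N \<delta> \<omega>. ennreal (norm_d d u))"

end

theory Submission
  imports Defs
begin


lemma norm_d_L2: "norm_d d u = L2_set u {..<d}"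
  by (simp add: norm_d_def L2_set_def)

lemma norm_d_nonneg: "norm_d d u \<ge> 0"
  by (simp add: norm_d_def sum_nonneg)

lemma norm_d_triangle: "norm_d d (\<lambda>i. u i + v i) \<le> norm_d d u + norm_d d v"
  unfolding norm_d_L2 by (rule L2_set_triangle_ineq)

lemma inner_d_CS: "\<bar>inner_d d u v\<bar> \<le> norm_d d u * norm_d d v"
proof -
  have "\<bar>inner_d d u v\<bar> \<le> (\<Sum>i<d. \<bar>u i\<bar> * \<bar>v i\<bar>)"
    unfolding inner_d_def by (rule order_trans[OF sum_abs]) (simp add: abs_mult)
  also have "\<dots> \<le> norm_d d u * norm_d d v" unfolding norm_d_L2 by (rule L2_set_mult_ineq)
  finally show ?thesis .
qed

lemma norm_d_scale: "norm_d d (\<lambda>i. c * u i) = \<bar>c\<bar> * norm_d d u"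
proof -
  have "(\<Sum>i<d. (c * u i)\<^sup>2) = c\<^sup>2 * (\<Sum>i<d. (u i)\<^sup>2)"
    by (simp add: power_mult_distrib sum_distrib_left)
  then show ?thesis by (simp add: norm_d_def real_sqrt_mult)
qed

lemma norm_d_cong: "(\<And>i. i < d \<Longrightarrow> u i = v i) \<Longrightarrow> norm_d d u = norm_d d v"
  by (simp add: norm_d_def)

lemma inner_d_cong: "(\<And>i. i < d \<Longrightarrow> u i = u' i) \<Longrightarrow> (\<And>i. i < d \<Longrightarrow> v i = v' i) \<Longrightarrow> inner_d d u v = inner_d d u' v'"
  by (simp add: inner_d_def)

lemma inner_d_scale: "inner_d d (\<lambda>i. c * u i) v = c * inner_d d u v"
  by (simp add: inner_d_def sum_distrib_left mult.assoc)

lemma inner_d_diff: "inner_d d (\<lambda>i. u i - w i) v = inner_d d u v - inner_d d w v"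
  by (simp add: inner_d_def sum_subtractf left_diff_distrib)

lemma space_Rd: "space (Rd d) = PiE {..<d} (\<lambda>_. UNIV)"
  by (simp add: Rd_def space_PiM)

lemma norm_d_zero: "norm_d d (\<lambda>i. 0) = 0" by (simp add: norm_d_def)


definition Leb :: "nat \<Rightarrow> (nat \<Rightarrow> real) measure" where
  "Leb d = PiM {..<d} (\<lambda>_. lborel)"

lemma space_Leb: "space (Leb d) = PiE {..<d} (\<lambda>_. UNIV)"
  by (simp add: Leb_def space_PiM)

lemma sets_Leb_Rd: "sets (Leb d) = sets (Rd d)"
  unfolding Leb_def Rd_def by (intro sets_PiM_cong) auto

lemma affine_1d:
  fixes c b :: real
  assumes c: "c > 0" and A: "A \<in> sets borel"
  shows "emeasure lborel ((\<lambda>t. b + c*t) -` A) = ennreal (1/c) * emeasure lborel A"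
proof -
  let ?D = "distr lborel borel (\<lambda>x. b + c*x)"
  have "emeasure lborel A = emeasure (density ?D (\<lambda>_. ennreal \<bar>c\<bar>)) A"
    using lborel_real_affine[of c b] c by simp
  also have "\<dots> = ennreal c * emeasure ?D A"
    using A c by (simp add: emeasure_density nn_integral_cmult_indicator)
  also have "emeasure ?D A = emeasure lborel ((\<lambda>t. b + c*t) -` A)"
    using A by (simp add: emeasure_distr)
  finally have eq: "emeasure lborel A = ennreal c * emeasure lborel ((\<lambda>t. b + c*t) -` A)" .
  have "ennreal (1/c) * ennreal c = 1" using c by (simp add: ennreal_mult[symmetric])
  then show ?thesis unfolding eq by (simp add: mult.assoc[symmetric])
qed

definition Taff :: "nat \<Rightarrow> (nat \<Rightarrow> real) \<Rightarrow> real \<Rightarrow> (nat \<Rightarrow> real) \<Rightarrow> (nat \<Rightarrow> real)" where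
  "Taff d v c x = (\<lambda>i\<in>{..<d}. v i + c * x i)"

lemma Taff_measurable: "Taff d v c \<in> measurable (Leb d) (Leb d)"
  unfolding Taff_def Leb_def by measurable

lemma Leb_affine:
  assumes c: "c > 0" and B: "B \<in> sets (Leb d)"
  shows "emeasure (Leb d) B = ennreal (c^d) * emeasure (Leb d) (Taff d v c -` B \<inter> space (Leb d))"
proof -
  interpret product_sigma_finite "\<lambda>_::nat. lborel :: real measure"
    by (simp add: product_sigma_finite_def sigma_finite_lborel)
  define P where "P = scale_measure (ennreal (c^d)) (distr (Leb d) (Leb d) (Taff d v c))"
  have "P = PiM {..<d} (\<lambda>_. lborel)"
  proof (rule PiM_eqI)
    show "finite {..<d}" by simp
    show "sets P = sets (PiM {..<d} (\<lambda>_. lborel))" by (simp add: P_def Leb_def)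
  next
    fix A :: "nat \<Rightarrow> real set" assume A: "\<And>i. i \<in> {..<d} \<Longrightarrow> A i \<in> sets lborel"
    have pre: "Taff d v c -` Pi\<^sub>E {..<d} A \<inter> space (Leb d) = Pi\<^sub>E {..<d} (\<lambda>i. (\<lambda>t. v i + c*t) -` A i)"
      by (auto simp: Taff_def space_Leb PiE_def Pi_def extensional_def)
    have PiA: "Pi\<^sub>E {..<d} A \<in> sets (Leb d)"
      using A unfolding Leb_def by (intro sets_PiM_I_finite) auto
    have "emeasure P (Pi\<^sub>E {..<d} A) = ennreal (c^d) * emeasure (Leb d) (Pi\<^sub>E {..<d} (\<lambda>i. (\<lambda>t. v i + c*t) -` A i))"
      using PiA Taff_measurable by (simp add: P_def emeasure_distr pre)
    also have "emeasure (Leb d) (Pi\<^sub>E {..<d} (\<lambda>i. (\<lambda>t. v i + c*t) -` A i)) = (\<Prod>i<d. emeasure lborel ((\<lambda>t. v i + c*t) -` A i))"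
      unfolding Leb_def using A by (intro emeasure_PiM) (auto intro!: measurable_sets_borel[where M=borel])
    also have "\<dots> = (\<Prod>i<d. ennreal (1/c) * emeasure lborel (A i))"
      using A c by (intro prod.cong refl affine_1d) auto
    also have "\<dots> = ennreal (1/c) ^ d * (\<Prod>i<d. emeasure lborel (A i))"
      by (simp add: prod.distrib)
    also have "ennreal (c^d) * (ennreal (1/c) ^ d * (\<Prod>i<d. emeasure lborel (A i))) = (\<Prod>i<d. emeasure lborel (A i))"
    proof -
      have "ennreal (c^d) * ennreal (1/c) ^ d = 1"
        using c by (simp add: ennreal_power[symmetric] ennreal_mult[symmetric] power_mult_distrib[symmetric])
      then show ?thesis by (simp add: mult.assoc[symmetric])
    qed
    finally show "emeasure P (Pi\<^sub>E {..<d} A) = (\<Prod>i\<in>{..<d}. emeasure lborel (A i))" by simp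
  qed
  then have "emeasure (Leb d) B = emeasure P B" by (simp add: Leb_def)
  also have "\<dots> = ennreal (c^d) * emeasure (Leb d) (Taff d v c -` B \<inter> space (Leb d))"
    using B Taff_measurable by (simp add: P_def emeasure_distr)
  finally show ?thesis .
qed


definition Bl :: "nat \<Rightarrow> (nat \<Rightarrow> real) \<Rightarrow> real \<Rightarrow> (nat \<Rightarrow> real) set" where
  "Bl d v \<rho> = {x \<in> space (Leb d). norm_d d (\<lambda>i. x i - v i) < \<rho>}"

lemma Bl_sets[measurable]: "Bl d v \<rho> \<in> sets (Leb d)"
proof -
  have "(\<lambda>x. norm_d d (\<lambda>i. x i - v i)) \<in> borel_measurable (Leb d)"
    unfolding norm_d_def Leb_def by measurable
  then show ?thesis unfolding Bl_def by measurable
qed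

lemma Bl_scale:
  assumes c: "c > 0"
  shows "emeasure (Leb d) (Bl d v (c*\<rho>)) = ennreal (c^d) * emeasure (Leb d) (Bl d (\<lambda>_. 0) \<rho>)"
proof -
  have "Taff d v c -` Bl d v (c*\<rho>) \<inter> space (Leb d) = Bl d (\<lambda>_. 0) \<rho>"
  proof -
    have "norm_d d (\<lambda>i. Taff d v c x i - v i) = c * norm_d d x" for x
    proof -
      have "norm_d d (\<lambda>i. Taff d v c x i - v i) = norm_d d (\<lambda>i. c * x i)"
        by (rule norm_d_cong) (simp add: Taff_def)
      then show ?thesis using c by (simp add: norm_d_scale)
    qed
    moreover have "Taff d v c x \<in> space (Leb d)" for x
      by (simp add: Taff_def space_Leb)
    ultimately show ?thesis using c by (auto simp: Bl_def)
  qed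
  then show ?thesis using Leb_affine[OF c Bl_sets, of d v "c*\<rho>" v] by simp
qed

lemma Bl_unit_finite: "emeasure (Leb d) (Bl d (\<lambda>_. 0) 1) < \<infinity>"
proof -
  have "Bl d (\<lambda>_. 0) 1 \<subseteq> PiE {..<d} (\<lambda>_. {-1..1})"
  proof
    fix x assume x: "x \<in> Bl d (\<lambda>_. 0) 1"
    have "\<bar>x i\<bar> \<le> 1" if i: "i < d" for i
    proof -
      have "(x i)\<^sup>2 \<le> (\<Sum>j<d. (x j)\<^sup>2)"
        using i by (intro member_le_sum) auto
      moreover have "sqrt (\<Sum>j<d. (x j)\<^sup>2) < 1" using x by (simp add: Bl_def norm_d_def)
      ultimately have "(x i)\<^sup>2 < 1"
        by (metis order_le_less_trans real_sqrt_lt_1_iff)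
      then show ?thesis by (simp add: abs_square_less_1 less_imp_le)
    qed
    then show "x \<in> PiE {..<d} (\<lambda>_. {-1..1})"
      using x by (auto simp: Bl_def space_Leb PiE_def Pi_def abs_le_iff)
  qed
  then have "emeasure (Leb d) (Bl d (\<lambda>_. 0) 1) \<le> emeasure (Leb d) (PiE {..<d} (\<lambda>_. {-1..1}))"
    by (intro emeasure_mono) (auto simp: Leb_def intro!: sets_PiM_I_finite)
  also have "\<dots> = (\<Prod>i<d. emeasure lborel {-1..(1::real)})"
    unfolding Leb_def by (intro product_sigma_finite.emeasure_PiM) (auto simp: product_sigma_finite_def sigma_finite_lborel)
  also have "\<dots> < \<infinity>" by (simp add: power_less_top_ennreal)
  finally show ?thesis .
qed

lemma Bl_unit_pos:
  assumes d: "d \<ge> 1"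
  shows "emeasure (Leb d) (Bl d (\<lambda>_. 0) 1) > 0"
proof -
  have "PiE {..<d} (\<lambda>_. {0..1/(2*real d)}) \<subseteq> Bl d (\<lambda>_. 0) 1"
  proof
    fix x assume x: "x \<in> PiE {..<d} (\<lambda>_. {0..1/(2*real d)})"
    have "(\<Sum>j<d. (x j)\<^sup>2) \<le> (\<Sum>j<d. (1/(2*real d))\<^sup>2)"
      using x by (intro sum_mono power_mono) (auto simp: PiE_def Pi_def)
    also have "\<dots> = 1/(4 * real d)" using d by (simp add: power2_eq_square)
    also have "\<dots> < 1" using d by (simp add: field_simps)
    finally have "sqrt (\<Sum>j<d. (x j)\<^sup>2) < 1" by simp
    then show "x \<in> Bl d (\<lambda>_. 0) 1"
      using x by (auto simp: Bl_def space_Leb norm_d_def PiE_def Pi_def)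
  qed
  then have "emeasure (Leb d) (PiE {..<d} (\<lambda>_. {0..1/(2*real d)})) \<le> emeasure (Leb d) (Bl d (\<lambda>_. 0) 1)"
    by (intro emeasure_mono) auto
  moreover have "emeasure (Leb d) (PiE {..<d} (\<lambda>_. {0..1/(2*real d)})) = (\<Prod>i<d. emeasure lborel {0..1/(2*real d)})"
    unfolding Leb_def by (intro product_sigma_finite.emeasure_PiM) (auto simp: product_sigma_finite_def sigma_finite_lborel)
  moreover have "(\<Prod>i<d. emeasure lborel {0..1/(2*real d)}) > 0"
  proof -
    have "0 < 1/(2*real d)" using d by simp
    then have "0 < ennreal ((1/(2*real d)) ^ d)" by simp
    then show ?thesis by (simp add: ennreal_power)
  qed
  ultimately show ?thesis by order
qed


lemma norm_d_sym: "norm_d d (\<lambda>i. x i - y i) = norm_d d (\<lambda>i. y i - x i)"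
  using norm_d_scale[of d "-1" "\<lambda>i. x i - y i"] by simp

lemma norm_d_tri3: "norm_d d (\<lambda>i. x i - z i) \<le> norm_d d (\<lambda>i. x i - y i) + norm_d d (\<lambda>i. y i - z i)"
  using norm_d_triangle[of d "\<lambda>i. x i - y i" "\<lambda>i. y i - z i"] by simp

lemma Bl_measure:
  assumes "\<rho> > 0"
  shows "emeasure (Leb d) (Bl d v \<rho>) = ennreal (\<rho>^d) * emeasure (Leb d) (Bl d (\<lambda>_. 0) 1)"
  using Bl_scale[OF assms, of d v 1] by simp

lemma packing:
  assumes d: "d \<ge> 1" and eta: "\<eta> > 0" and r: "r \<ge> 0" and fin: "finite V"
    and Vsp: "V \<subseteq> space (Leb d)" and Vr: "\<forall>v\<in>V. norm_d d v \<le> r"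
    and sep: "\<forall>v\<in>V. \<forall>w\<in>V. v \<noteq> w \<longrightarrow> \<eta> < norm_d d (\<lambda>i. v i - w i)"
  shows "real (card V) \<le> (2*r/\<eta> + 1)^d"
proof -
  define m1 where "m1 = emeasure (Leb d) (Bl d (\<lambda>_. 0) 1)"
  obtain M1 where M1: "m1 = ennreal M1" "M1 > 0"
  proof -
    have "m1 < \<infinity>" "m1 > 0" using Bl_unit_finite[of d] Bl_unit_pos[OF d] unfolding m1_def by auto
    then obtain M where "m1 = ennreal M" "M \<ge> 0" by (auto simp: less_top_ennreal)
    with \<open>m1 > 0\<close> show ?thesis using that by auto
  qed
  have disj: "disjoint_family_on (\<lambda>v. Bl d v (\<eta>/2)) V"
    unfolding disjoint_family_on_def
  proof (intro ballI impI)
    fix v w assume vw: "v \<in> V" "w \<in> V" "v \<noteq> w"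
    show "Bl d v (\<eta>/2) \<inter> Bl d w (\<eta>/2) = {}"
    proof (rule ccontr)
      assume "Bl d v (\<eta>/2) \<inter> Bl d w (\<eta>/2) \<noteq> {}"
      then obtain x where x: "norm_d d (\<lambda>i. x i - v i) < \<eta>/2" "norm_d d (\<lambda>i. x i - w i) < \<eta>/2"
        by (auto simp: Bl_def)
      have "norm_d d (\<lambda>i. v i - w i) \<le> norm_d d (\<lambda>i. v i - x i) + norm_d d (\<lambda>i. x i - w i)"
        by (rule norm_d_tri3)
      also have "\<dots> < \<eta>" using x norm_d_sym[of d v x] by simp
      moreover have "\<eta> < norm_d d (\<lambda>i. v i - w i)" using sep vw by blast
      ultimately show False by simp
    qed
  qed
  have sub: "(\<Union>v\<in>V. Bl d v (\<eta>/2)) \<subseteq> Bl d (\<lambda>_. 0) (r + \<eta>/2)"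
  proof (clarify)
    fix v x assume v: "v \<in> V" and x: "x \<in> Bl d v (\<eta>/2)"
    have "norm_d d (\<lambda>i. x i - 0) \<le> norm_d d (\<lambda>i. x i - v i) + norm_d d (\<lambda>i. v i - 0)"
      by (rule norm_d_tri3)
    also have "\<dots> < \<eta>/2 + r" using x Vr v by (simp add: Bl_def add_less_le_mono)
    finally show "x \<in> Bl d (\<lambda>_. 0) (r + \<eta>/2)" using x unfolding Bl_def by simp
  qed
  have "(\<Sum>v\<in>V. emeasure (Leb d) (Bl d v (\<eta>/2))) = emeasure (Leb d) (\<Union>v\<in>V. Bl d v (\<eta>/2))"
    using disj fin by (intro sum_emeasure) auto
  also have "\<dots> \<le> emeasure (Leb d) (Bl d (\<lambda>_. 0) (r + \<eta>/2))"
    using sub by (intro emeasure_mono) auto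
  finally have calc: "(\<Sum>v\<in>V. emeasure (Leb d) (Bl d v (\<eta>/2))) \<le> emeasure (Leb d) (Bl d (\<lambda>_. 0) (r + \<eta>/2))" .
  have e1: "emeasure (Leb d) (Bl d v (\<eta>/2)) = ennreal ((\<eta>/2)^d) * ennreal M1" for v
    using Bl_measure[of "\<eta>/2" d v] eta M1 unfolding m1_def by simp
  have e2: "emeasure (Leb d) (Bl d (\<lambda>_. 0) (r + \<eta>/2)) = ennreal ((r+\<eta>/2)^d) * ennreal M1"
    using Bl_measure[of "r+\<eta>/2" d "\<lambda>_. 0"] eta r M1 unfolding m1_def by simp
  have "(\<Sum>v\<in>V. emeasure (Leb d) (Bl d v (\<eta>/2))) = of_nat (card V) * (ennreal ((\<eta>/2)^d) * ennreal M1)"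
    by (simp only: e1 sum_constant)
  also have "\<dots> = ennreal (real (card V) * (\<eta>/2)^d * M1)"
    using eta M1 by (simp add: ennreal_mult ennreal_of_nat_eq_real_of_nat mult.assoc)
  finally have l: "(\<Sum>v\<in>V. emeasure (Leb d) (Bl d v (\<eta>/2))) = ennreal (real (card V) * (\<eta>/2)^d * M1)" .
  have rr: "emeasure (Leb d) (Bl d (\<lambda>_. 0) (r + \<eta>/2)) = ennreal ((r+\<eta>/2)^d * M1)"
    using eta r M1 by (simp only: e2) (simp add: ennreal_mult)
  have "real (card V) * (\<eta>/2)^d * M1 \<le> (r+\<eta>/2)^d * M1"
    using calc unfolding l rr using M1 eta r by (subst (asm) ennreal_le_iff) auto
  then have "real (card V) * (\<eta>/2)^d \<le> (r+\<eta>/2)^d" using M1 by simp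
  moreover have "(\<eta>/2)^d > 0" using eta by simp
  ultimately have "real (card V) \<le> (r+\<eta>/2)^d / (\<eta>/2)^d" by (simp add: pos_le_divide_eq)
  also have "\<dots> = ((r+\<eta>/2) / (\<eta>/2))^d" by (rule power_divide[symmetric])
  also have "(r+\<eta>/2) / (\<eta>/2) = 2*r/\<eta> + 1" using eta by (simp add: field_simps)
  finally show ?thesis .
qed


definition sepset :: "nat \<Rightarrow> real \<Rightarrow> real \<Rightarrow> (nat \<Rightarrow> real) set \<Rightarrow> bool" where
  "sepset d r \<eta> V \<longleftrightarrow> finite V \<and> V \<subseteq> {v \<in> space (Leb d). norm_d d v = r} \<and>
     (\<forall>v\<in>V. \<forall>w\<in>V. v \<noteq> w \<longrightarrow> \<eta> < norm_d d (\<lambda>i. v i - w i))"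

lemma net_exists:
  assumes d: "d \<ge> 1" and eta: "\<eta> > 0" and r: "r \<ge> 0"
  shows "\<exists>V. finite V \<and> V \<subseteq> {v \<in> space (Leb d). norm_d d v = r} \<and>
     (\<forall>u \<in> space (Leb d). norm_d d u = r \<longrightarrow> (\<exists>v\<in>V. norm_d d (\<lambda>i. u i - v i) \<le> \<eta>)) \<and>
     real (card V) \<le> (2*r/\<eta> + 1)^d"
proof -
  define B where "B = (2*r/\<eta> + 1)^d"
  have bnd: "real (card V) \<le> B" if "sepset d r \<eta> V" for V
    using that unfolding sepset_def B_def by (intro packing[OF d eta r]) auto
  have "\<forall>V. sepset d r \<eta> V \<longrightarrow> card V < nat \<lfloor>B\<rfloor> + 1"
  proof (intro allI impI)
    fix V assume "sepset d r \<eta> V"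
    then have "real (card V) \<le> B" by (rule bnd)
    then have "card V \<le> nat \<lfloor>B\<rfloor>" by (rule le_nat_floor)
    then show "card V < nat \<lfloor>B\<rfloor> + 1" by simp
  qed
  moreover have e0: "sepset d r \<eta> {}" by (simp add: sepset_def)
  ultimately obtain V where V: "sepset d r \<eta> V" and mx: "\<forall>W. sepset d r \<eta> W \<longrightarrow> card W \<le> card V"
    using Lattices_Big.ex_has_greatest_nat[of "sepset d r \<eta>" "{}" card "nat \<lfloor>B\<rfloor> + 1"] by metis
  have cov: "\<exists>v\<in>V. norm_d d (\<lambda>i. u i - v i) \<le> \<eta>" if u: "u \<in> space (Leb d)" "norm_d d u = r" for u
  proof (rule ccontr)
    assume "\<not> ?thesis"
    then have far: "\<forall>v\<in>V. \<eta> < norm_d d (\<lambda>i. u i - v i)" by auto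
    have uV: "u \<notin> V"
    proof
      assume "u \<in> V"
      with far have "\<eta> < norm_d d (\<lambda>i. u i - u i)" by blast
      then show False using eta by (simp add: norm_d_def)
    qed
    have far2: "\<forall>v\<in>V. \<eta> < norm_d d (\<lambda>i. v i - u i)"
    proof
      fix v assume "v \<in> V"
      then have "\<eta> < norm_d d (\<lambda>i. u i - v i)" using far by blast
      then show "\<eta> < norm_d d (\<lambda>i. v i - u i)" by (simp only: norm_d_sym[of d u v])
    qed
    have "sepset d r \<eta> (insert u V)"
      using V u far far2 unfolding sepset_def by auto
    then have "card (insert u V) \<le> card V" using mx by blast
    moreover have "card (insert u V) = Suc (card V)" using V uV by (simp add: sepset_def)
    ultimately show False by simp
  qed
  show ?thesis apply (rule exI[of _ V]) using V cov bnd[OF V] unfolding sepset_def B_def by auto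
qed


lemma norm_d_meas[measurable]: "norm_d d \<in> borel_measurable (Rd d)"
  unfolding norm_d_def[abs_def] Rd_def by measurable

lemma inner_d_meas[measurable]: "inner_d d v \<in> borel_measurable (Rd d)"
  unfolding inner_d_def[abs_def] Rd_def by measurable

lemma sphere_sets[measurable]: "sphere_d d \<in> sets (Rd d)"
  unfolding sphere_d_def by measurable

definition Sset :: "nat \<Rightarrow> real \<Rightarrow> (nat \<Rightarrow> real) \<Rightarrow> real \<Rightarrow> ((nat \<Rightarrow> real) \<times> real) set" where
  "Sset d \<delta> v \<eta> = {p \<in> space (Rd d) \<times> UNIV. fst p \<notin> sphere_d d \<or> \<delta> < \<bar>snd p\<bar> \<or> \<bar>inner_d d v (fst p) - snd p\<bar> \<le> \<delta> + \<eta>}"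

lemma space_unif[simp]: "space (unif_noise \<delta>) = UNIV"
  by (simp add: unif_noise_def)

lemma sets_unif[simp, measurable_cong]: "sets (unif_noise \<delta>) = sets borel"
  by (simp add: unif_noise_def)

lemma Sset_sets_Rd: "Sset d \<delta> v \<eta> \<in> sets (Rd d \<Otimes>\<^sub>M (borel :: real measure))"
proof -
  have "Sset d \<delta> v \<eta> = {p \<in> space (Rd d \<Otimes>\<^sub>M (borel :: real measure)). fst p \<notin> sphere_d d \<or> \<delta> < \<bar>snd p\<bar> \<or> \<bar>inner_d d v (fst p) - snd p\<bar> \<le> \<delta> + \<eta>}"
    by (simp add: Sset_def space_pair_measure)
  also have "\<dots> \<in> sets (Rd d \<Otimes>\<^sub>M (borel :: real measure))" by measurable
  finally show ?thesis .
qed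

lemma Sset_sets:
  assumes "sets \<mu> = sets (Rd d)"
  shows "Sset d \<delta> v \<eta> \<in> sets (\<mu> \<Otimes>\<^sub>M unif_noise \<delta>')"
proof -
  have "sets (\<mu> \<Otimes>\<^sub>M unif_noise \<delta>') = sets (Rd d \<Otimes>\<^sub>M (borel :: real measure))"
    using assms by (intro sets_pair_measure_cong) auto
  then show ?thesis using Sset_sets_Rd by simp
qed

lemma unif_prob: "\<delta> > 0 \<Longrightarrow> prob_space (unif_noise \<delta>)"
  unfolding unif_noise_def by (intro prob_space_uniform_measure) auto

lemma section_bound:
  assumes dl: "\<delta> > 0" and eta: "\<eta> \<ge> 0" and phi: "\<phi> \<in> sphere_d d"
  shows "emeasure (unif_noise \<delta>) (Pair \<phi> -` Sset d \<delta> v \<eta>) \<le> ennreal (max 0 (2*\<delta> + \<eta> - \<bar>inner_d d v \<phi>\<bar>) / (2*\<delta>))"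
proof -
  define a where "a = inner_d d v \<phi>"
  define X where "X = {\<epsilon>::real. \<delta> < \<bar>\<epsilon>\<bar> \<or> \<bar>a - \<epsilon>\<bar> \<le> \<delta> + \<eta>}"
  have phisp: "\<phi> \<in> space (Rd d)" using phi by (simp add: sphere_d_def)
  have sec: "Pair \<phi> -` Sset d \<delta> v \<eta> = X"
    using phi phisp by (auto simp: Sset_def X_def a_def)
  have Xb: "X \<in> sets borel" unfolding X_def by measurable
  define lo where "lo = max (-\<delta>) (a - \<delta> - \<eta>)"
  define hi where "hi = min \<delta> (a + \<delta> + \<eta>)"
  have sub: "{-\<delta>..\<delta>} \<inter> X \<subseteq> {lo..hi}"
    by (auto simp: X_def lo_def hi_def abs_le_iff)
  have len: "(if lo \<le> hi then hi - lo else 0) \<le> max 0 (2*\<delta> + \<eta> - \<bar>a\<bar>)"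
    unfolding lo_def hi_def by (auto simp: abs_if max_def min_def)
  have "emeasure (unif_noise \<delta>) X = emeasure lborel ({-\<delta>..\<delta>} \<inter> X) / emeasure lborel {-\<delta>..\<delta>}"
    unfolding unif_noise_def using Xb by (subst emeasure_uniform_measure) auto
  also have "\<dots> \<le> emeasure lborel {lo..hi} / emeasure lborel {-\<delta>..\<delta>}"
    using sub Xb by (intro divide_right_mono_ennreal emeasure_mono) auto
  also have "emeasure lborel {lo..hi} \<le> ennreal (max 0 (2*\<delta> + \<eta> - \<bar>a\<bar>))"
  proof -
    have "emeasure lborel {lo..hi} = ennreal (if lo \<le> hi then hi - lo else 0)"
      by (rule emeasure_lborel_Icc_eq)
    then show ?thesis using len ennreal_leI by metis
  qed
  then have "emeasure lborel {lo..hi} / emeasure lborel {-\<delta>..\<delta>} \<le> ennreal (max 0 (2*\<delta> + \<eta> - \<bar>a\<bar>)) / ennreal (2*\<delta>)"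
  proof -
    have "emeasure lborel {-\<delta>..\<delta>} = ennreal (2*\<delta>)" using dl by simp
    then show ?thesis using \<open>emeasure lborel {lo..hi} \<le> _\<close> by (simp add: divide_right_mono_ennreal)
  qed
  also have "\<dots> = ennreal (max 0 (2*\<delta> + \<eta> - \<bar>a\<bar>) / (2*\<delta>))"
    using dl by (intro divide_ennreal) auto
  finally show ?thesis unfolding sec a_def .
qed


locale Stp =
  fixes d :: nat and \<delta> :: real and \<mu> :: "(nat \<Rightarrow> real) measure"
  assumes d1: "d \<ge> 1" and dpos: "\<delta> > 0" and P: "prob_space \<mu>" and sets_mu: "sets \<mu> = sets (Rd d)"
    and AEs: "AE v in \<mu>. v \<in> sphere_d d"
begin

abbreviation "\<nu> \<equiv> unif_noise \<delta>"
abbreviation "M2 \<equiv> \<mu> \<Otimes>\<^sub>M \<nu>"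

lemma space_mu: "space \<mu> = space (Rd d)"
  using sets_eq_imp_space_eq[OF sets_mu] .

lemma inner_meas_mu: "inner_d d v \<in> borel_measurable \<mu>"
  using measurable_cong_sets[OF sets_mu refl] inner_d_meas by blast

lemma small_sets: "{\<phi> \<in> space \<mu>. \<bar>inner_d d v \<phi>\<bar> \<le> t} \<in> sets \<mu>"
  using inner_meas_mu[of v] by measurable

lemma mu_emeasure: "emeasure \<mu> A = ennreal (measure \<mu> A)"
proof -
  interpret prob_space \<mu> by (rule P)
  show ?thesis by (rule emeasure_eq_measure)
qed

lemma nu_prob: "prob_space \<nu>" using unif_prob[OF dpos] .

lemma nu_le1: "emeasure \<nu> A \<le> 1"
  using prob_space.emeasure_le_1[OF nu_prob] .

lemma Q_fubini: "emeasure M2 (Sset d \<delta> v \<eta>) = (\<integral>\<^sup>+\<phi>. emeasure \<nu> (Pair \<phi> -` Sset d \<delta> v \<eta>) \<partial>\<mu>)"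
proof -
  interpret sigma_finite_measure \<nu> using nu_prob by (simp add: prob_space_imp_sigma_finite)
  show ?thesis by (rule emeasure_pair_measure_alt) (rule Sset_sets[OF sets_mu])
qed

lemma sphere_space: "\<phi> \<in> sphere_d d \<Longrightarrow> \<phi> \<in> space \<mu>"
  by (simp add: space_mu sphere_d_def)

lemma Q_regime1:
  assumes eta: "\<eta> > 0" "\<eta> \<le> 2*\<delta>"
    and sm: "measure \<mu> {\<phi> \<in> space \<mu>. \<bar>inner_d d v \<phi>\<bar> \<le> 2*\<eta>} \<le> 1/2"
  shows "emeasure M2 (Sset d \<delta> v \<eta>) \<le> ennreal (1 - \<eta>/(4*\<delta>))"
proof -
  define c where "c = \<eta>/(2*\<delta>)"
  have c: "0 < c" "c \<le> 1" using eta dpos by (auto simp: c_def)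
  define Sm where "Sm = {\<phi> \<in> space \<mu>. \<bar>inner_d d v \<phi>\<bar> \<le> 2*\<eta>}"
  have Sm: "Sm \<in> sets \<mu>" unfolding Sm_def by (rule small_sets)
  have pw: "AE \<phi> in \<mu>. emeasure \<nu> (Pair \<phi> -` Sset d \<delta> v \<eta>) \<le> ennreal (1 - c) + ennreal c * indicator Sm \<phi>"
    using AEs
  proof (rule AE_mp, intro AE_I2 impI)
    fix \<phi> assume phi: "\<phi> \<in> sphere_d d"
    show "emeasure \<nu> (Pair \<phi> -` Sset d \<delta> v \<eta>) \<le> ennreal (1 - c) + ennreal c * indicator Sm \<phi>"
    proof (cases "\<phi> \<in> Sm")
      case True
      then have "ennreal (1 - c) + ennreal c * indicator Sm \<phi> = 1"
        using c by (simp add: ennreal_plus[symmetric] del: ennreal_plus)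
      then show ?thesis using nu_le1 by simp
    next
      case False
      then have big: "2*\<eta> < \<bar>inner_d d v \<phi>\<bar>" using sphere_space[OF phi] by (auto simp: Sm_def)
      have "max 0 (2*\<delta> + \<eta> - \<bar>inner_d d v \<phi>\<bar>) / (2*\<delta>) \<le> 1 - c"
        using big eta dpos by (auto simp: c_def field_simps max_def)
      then have "emeasure \<nu> (Pair \<phi> -` Sset d \<delta> v \<eta>) \<le> ennreal (1 - c)"
        using section_bound[OF dpos _ phi, of \<eta> v] eta
        by (meson ennreal_leI less_imp_le order_trans)
      then show ?thesis using False by simp
    qed
  qed
  have "emeasure M2 (Sset d \<delta> v \<eta>) \<le> (\<integral>\<^sup>+\<phi>. ennreal (1 - c) + ennreal c * indicator Sm \<phi> \<partial>\<mu>)"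
    unfolding Q_fubini using pw by (rule nn_integral_mono_AE)
  also have "\<dots> = ennreal (1 - c) * emeasure \<mu> (space \<mu>) + ennreal c * emeasure \<mu> Sm"
    using Sm by (subst nn_integral_add) (auto simp: nn_integral_cmult_indicator)
  also have "\<dots> = ennreal (1 - c) + ennreal c * ennreal (measure \<mu> Sm)"
    using P by (simp add: prob_space.emeasure_space_1 mu_emeasure[of Sm])
  also have "\<dots> \<le> ennreal (1 - c) + ennreal c * ennreal (1/2)"
    using sm unfolding Sm_def by (intro add_mono mult_mono ennreal_leI) auto
  also have "\<dots> = ennreal (1 - \<eta>/(4*\<delta>))"
  proof -
    have "ennreal c * ennreal (1/2) = ennreal (c * (1/2))"
      by (rule ennreal_mult[symmetric]) (use c in auto)
    moreover have "ennreal (1 - c) + ennreal (c * (1/2)) = ennreal (1 - c + c * (1/2))"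
      by (rule ennreal_plus[symmetric]) (use c in auto)
    ultimately have "ennreal (1 - c) + ennreal c * ennreal (1/2) = ennreal (1 - c + c * (1/2))" by simp
    also have "1 - c + c * (1/2) = 1 - \<eta>/(4*\<delta>)" using dpos by (simp add: c_def field_simps)
    finally show ?thesis .
  qed
  finally show ?thesis .
qed

lemma Q_regime2:
  assumes eta: "\<eta> \<ge> 0"
  shows "emeasure M2 (Sset d \<delta> v \<eta>) \<le> ennreal (measure \<mu> {\<phi> \<in> space \<mu>. \<bar>inner_d d v \<phi>\<bar> \<le> 2*\<delta> + \<eta>})"
proof -
  define Sm where "Sm = {\<phi> \<in> space \<mu>. \<bar>inner_d d v \<phi>\<bar> \<le> 2*\<delta> + \<eta>}"
  have Sm: "Sm \<in> sets \<mu>" unfolding Sm_def by (rule small_sets)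
  have pw: "AE \<phi> in \<mu>. emeasure \<nu> (Pair \<phi> -` Sset d \<delta> v \<eta>) \<le> indicator Sm \<phi>"
    using AEs
  proof (rule AE_mp, intro AE_I2 impI)
    fix \<phi> assume phi: "\<phi> \<in> sphere_d d"
    show "emeasure \<nu> (Pair \<phi> -` Sset d \<delta> v \<eta>) \<le> indicator Sm \<phi>"
    proof (cases "\<phi> \<in> Sm")
      case True
      then show ?thesis using nu_le1 by simp
    next
      case False
      then have big: "2*\<delta> + \<eta> < \<bar>inner_d d v \<phi>\<bar>" using sphere_space[OF phi] by (auto simp: Sm_def)
      have zero: "max 0 (2*\<delta> + \<eta> - \<bar>inner_d d v \<phi>\<bar>) / (2*\<delta>) = 0"
        using big by (simp add: max_def)
      have "emeasure \<nu> (Pair \<phi> -` Sset d \<delta> v \<eta>) \<le> ennreal 0"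
        using section_bound[OF dpos eta phi, of v] unfolding zero .
      then show ?thesis using False by simp
    qed
  qed
  have "emeasure M2 (Sset d \<delta> v \<eta>) \<le> (\<integral>\<^sup>+\<phi>. indicator Sm \<phi> \<partial>\<mu>)"
    unfolding Q_fubini using pw by (rule nn_integral_mono_AE)
  also have "\<dots> = emeasure \<mu> Sm" using Sm by simp
  also have "\<dots> = ennreal (measure \<mu> Sm)" using P by (simp add: mu_emeasure)
  finally show ?thesis unfolding Sm_def .
qed

end


context Stp begin

abbreviation "\<Omega> N \<equiv> sample_law N \<mu> \<delta>"

lemma M2_prob: "prob_space M2"
  using prob_space_pair[OF P nu_prob] .

lemma space_M2: "space M2 = space (Rd d) \<times> UNIV"
  by (simp add: space_pair_measure space_mu)

lemma space_Omega: "space (\<Omega> N) = PiE {..<N} (\<lambda>_. space (Rd d) \<times> UNIV)"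
  by (simp add: sample_law_def space_PiM space_M2)

lemma Sset_sub: "Sset d \<delta> v \<eta> \<subseteq> space M2"
  by (auto simp: Sset_def space_M2)

lemma G_sets: "PiE {..<N} (\<lambda>_. Sset d \<delta> v \<eta>) \<in> sets (\<Omega> N)"
  unfolding sample_law_def by (intro sets_PiM_I_finite Sset_sets[OF sets_mu]) auto

lemma G_measure: "emeasure (\<Omega> N) (PiE {..<N} (\<lambda>_. Sset d \<delta> v \<eta>)) = emeasure M2 (Sset d \<delta> v \<eta>) ^ N"
proof -
  interpret product_sigma_finite "\<lambda>_::nat. M2"
    unfolding product_sigma_finite_def using M2_prob by (simp add: prob_space_imp_sigma_finite)
  have "emeasure (\<Omega> N) (PiE {..<N} (\<lambda>_. Sset d \<delta> v \<eta>)) = (\<Prod>i<N. emeasure M2 (Sset d \<delta> v \<eta>))"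
    unfolding sample_law_def by (intro emeasure_PiM Sset_sets[OF sets_mu]) auto
  then show ?thesis by simp
qed

lemma inclusion:
  assumes om: "\<omega> \<in> space (\<Omega> N)" and r: "r > 0" and eta: "\<eta> \<ge> 0"
    and cov: "\<forall>u \<in> space (Rd d). norm_d d u = r \<longrightarrow> (\<exists>v\<in>V. norm_d d (\<lambda>i. u i - v i) \<le> \<eta>)"
    and W: "ennreal r < W_N d N \<delta> \<omega>"
  shows "\<exists>v\<in>V. \<omega> \<in> PiE {..<N} (\<lambda>_. Sset d \<delta> v \<eta>)"
proof -
  obtain u where u: "u \<in> P_N d N \<delta> \<omega>" and ru: "r < norm_d d u"
    using W r unfolding W_N_def by (auto simp: less_SUP_iff ennreal_less_iff)
  have usp: "u \<in> space (Rd d)" and uP: "\<forall>n<N. \<bar>inner_d d u (fst (\<omega> n)) - snd (\<omega> n)\<bar> \<le> \<delta>"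
    using u by (auto simp: P_N_def)
  define t where "t = r / norm_d d u"
  have t: "0 < t" "t < 1" using r ru by (auto simp: t_def)
  define u' where "u' = (\<lambda>i\<in>{..<d}. t * u i)"
  have u'sp: "u' \<in> space (Rd d)" by (simp add: u'_def space_Rd)
  have "norm_d d u' = norm_d d (\<lambda>i. t * u i)" by (rule norm_d_cong) (simp add: u'_def)
  also have "\<dots> = \<bar>t\<bar> * norm_d d u" by (rule norm_d_scale)
  also have "\<dots> = r" using t r ru by (simp add: t_def)
  finally have nu': "norm_d d u' = r" .
  obtain v where v: "v \<in> V" and uv: "norm_d d (\<lambda>i. u' i - v i) \<le> \<eta>"
    using cov u'sp nu' by blast
  have "\<omega> \<in> PiE {..<N} (\<lambda>_. Sset d \<delta> v \<eta>)"
  proof -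
    have "\<omega> n \<in> Sset d \<delta> v \<eta>" if n: "n < N" for n
    proof -
      obtain \<phi> \<epsilon> where on: "\<omega> n = (\<phi>, \<epsilon>)" by fastforce
      have sp: "\<phi> \<in> space (Rd d)" using om n on by (auto simp: space_Omega PiE_def Pi_def)
      show ?thesis
      proof (cases "\<phi> \<in> sphere_d d \<and> \<bar>\<epsilon>\<bar> \<le> \<delta>")
        case False
        then show ?thesis using sp on by (auto simp: Sset_def)
      next
        case True
        then have nphi: "norm_d d \<phi> = 1" and eps: "\<bar>\<epsilon>\<bar> \<le> \<delta>" by (auto simp: sphere_d_def)
        have ue: "\<bar>inner_d d u \<phi> - \<epsilon>\<bar> \<le> \<delta>" using uP n on by force
        have "inner_d d u' \<phi> = inner_d d (\<lambda>i. t * u i) \<phi>" by (rule inner_d_cong) (auto simp: u'_def)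
        also have "\<dots> = t * inner_d d u \<phi>" by (rule inner_d_scale)
        finally have iu': "inner_d d u' \<phi> = t * inner_d d u \<phi>" .
        have "\<bar>inner_d d u' \<phi> - \<epsilon>\<bar> = \<bar>t * (inner_d d u \<phi> - \<epsilon>) - (1 - t) * \<epsilon>\<bar>"
          unfolding iu' by (simp add: algebra_simps)
        also have "\<dots> \<le> t * \<bar>inner_d d u \<phi> - \<epsilon>\<bar> + (1 - t) * \<bar>\<epsilon>\<bar>"
          using t by (auto intro: order_trans[OF abs_triangle_ineq4] simp: abs_mult)
        also have "\<dots> \<le> t * \<delta> + (1 - t) * \<delta>"
          using t ue eps by (intro add_mono mult_left_mono) auto
        finally have u'e: "\<bar>inner_d d u' \<phi> - \<epsilon>\<bar> \<le> \<delta>" by (simp add: algebra_simps)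
        have "\<bar>inner_d d v \<phi> - inner_d d u' \<phi>\<bar> = \<bar>inner_d d (\<lambda>i. v i - u' i) \<phi>\<bar>"
          by (simp add: inner_d_diff)
        also have "\<dots> \<le> norm_d d (\<lambda>i. v i - u' i) * norm_d d \<phi>" by (rule inner_d_CS)
        also have "\<dots> = norm_d d (\<lambda>i. u' i - v i)" using nphi by (simp add: norm_d_sym[of d v u'])
        finally have "\<bar>inner_d d v \<phi> - inner_d d u' \<phi>\<bar> \<le> \<eta>" using uv by simp
        then have "\<bar>inner_d d v \<phi> - \<epsilon>\<bar> \<le> \<delta> + \<eta>" using u'e by linarith
        then show ?thesis using sp on by (auto simp: Sset_def)
      qed
    qed
    moreover have "\<omega> \<in> extensional {..<N}" using om by (simp add: space_Omega PiE_def)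
    ultimately show ?thesis by (auto simp: PiE_def Pi_def)
  qed
  then show ?thesis using v by blast
qed

end


locale Stp2 = Stp +
  fixes \<alpha> s :: real
  assumes alpha: "\<alpha> \<ge> 1" and spos: "s > 0"
    and SB: "\<forall>x \<in> sphere_d d. \<forall>t \<in> {0..1}. measure \<mu> {v \<in> space \<mu>. \<bar>inner_d d x v\<bar> \<le> t} \<le> \<alpha> * t powr s"
begin

definition "A = (2*\<alpha>) powr (1/s)"

lemma A_pow: "A powr s = 2*\<alpha>"
  using alpha spos by (simp add: A_def powr_powr)

lemma A_ge1: "A \<ge> 1"
  using alpha spos unfolding A_def by (intro ge_one_powr_ge_zero) auto

lemma A_pos: "A > 0" using A_ge1 by simp

lemma scaled_small:
  assumes v: "v \<in> space (Rd d)" "norm_d d v = r" and r: "r > 0" and t: "0 \<le> t" "t \<le> r"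
  shows "measure \<mu> {\<phi> \<in> space \<mu>. \<bar>inner_d d v \<phi>\<bar> \<le> t} \<le> \<alpha> * (t/r) powr s"
proof -
  define x where "x = (\<lambda>i\<in>{..<d}. (1/r) * v i)"
  have "norm_d d x = norm_d d (\<lambda>i. (1/r) * v i)" by (rule norm_d_cong) (simp add: x_def)
  also have "\<dots> = \<bar>1/r\<bar> * norm_d d v" by (rule norm_d_scale)
  also have "\<dots> = 1" using v r by simp
  finally have xs: "x \<in> sphere_d d" by (simp add: sphere_d_def x_def space_Rd)
  have ix: "inner_d d v \<phi> = r * inner_d d x \<phi>" for \<phi>
  proof -
    have "inner_d d x \<phi> = inner_d d (\<lambda>i. (1/r) * v i) \<phi>" by (rule inner_d_cong) (auto simp: x_def)
    also have "\<dots> = (1/r) * inner_d d v \<phi>" by (rule inner_d_scale)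
    finally show ?thesis using r by simp
  qed
  have "{\<phi> \<in> space \<mu>. \<bar>inner_d d v \<phi>\<bar> \<le> t} = {\<phi> \<in> space \<mu>. \<bar>inner_d d x \<phi>\<bar> \<le> t/r}"
    using r by (auto simp: ix abs_mult field_simps)
  also have "measure \<mu> \<dots> \<le> \<alpha> * (t/r) powr s"
    using SB xs t r by auto
  finally show ?thesis .
qed


lemma generic_bound:
  assumes r: "r > 0" and eta: "\<eta> > 0" and q: "q \<ge> 0"
    and Qb: "\<And>v. v \<in> space (Rd d) \<Longrightarrow> norm_d d v = r \<Longrightarrow> emeasure M2 (Sset d \<delta> v \<eta>) \<le> ennreal q"
  shows "\<exists>E \<in> sets (\<Omega> N). (\<forall>\<omega>\<in>space (\<Omega> N). ennreal r < W_N d N \<delta> \<omega> \<longrightarrow> \<omega> \<in> E) \<and>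
           emeasure (\<Omega> N) E \<le> ennreal ((2*r/\<eta> + 1)^d * q^N)"
proof -
  obtain V where fin: "finite V" and Vs: "V \<subseteq> {v \<in> space (Leb d). norm_d d v = r}"
    and cov: "\<forall>u \<in> space (Leb d). norm_d d u = r \<longrightarrow> (\<exists>v\<in>V. norm_d d (\<lambda>i. u i - v i) \<le> \<eta>)"
    and card: "real (card V) \<le> (2*r/\<eta> + 1)^d"
    using net_exists[OF d1 eta, of r] r by auto
  have spLR: "space (Leb d) = space (Rd d)" by (simp add: space_Leb space_Rd)
  define E where "E = (\<Union>v\<in>V. PiE {..<N} (\<lambda>_. Sset d \<delta> v \<eta>))"
  have Es: "E \<in> sets (\<Omega> N)" unfolding E_def using fin G_sets by auto
  have inc: "\<forall>\<omega>\<in>space (\<Omega> N). ennreal r < W_N d N \<delta> \<omega> \<longrightarrow> \<omega> \<in> E"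
  proof (intro ballI impI)
    fix \<omega> assume om: "\<omega> \<in> space (\<Omega> N)" and W: "ennreal r < W_N d N \<delta> \<omega>"
    show "\<omega> \<in> E" using inclusion[OF om r less_imp_le[OF eta] _ W, of V] cov spLR unfolding E_def by auto
  qed
  have "emeasure (\<Omega> N) E \<le> (\<Sum>v\<in>V. emeasure (\<Omega> N) (PiE {..<N} (\<lambda>_. Sset d \<delta> v \<eta>)))"
    unfolding E_def using fin G_sets by (intro emeasure_subadditive_finite) auto
  also have "\<dots> = (\<Sum>v\<in>V. emeasure M2 (Sset d \<delta> v \<eta>) ^ N)" by (simp add: G_measure)
  also have "\<dots> \<le> (\<Sum>v\<in>V. ennreal q ^ N)"
    using Vs spLR by (intro sum_mono power_mono Qb) auto
  also have "\<dots> = ennreal (real (card V) * q^N)"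
    using q by (simp add: ennreal_power ennreal_mult ennreal_of_nat_eq_real_of_nat)
  also have "\<dots> \<le> ennreal ((2*r/\<eta> + 1)^d * q^N)"
    using card q by (intro ennreal_leI mult_right_mono) auto
  finally show ?thesis using Es inc by blast
qed

definition "bnd N r = (if r \<le> 4*\<delta>*A then (4*A+1)^d * (1 - r/(8*\<delta>*A))^N
                       else (2*r/\<delta>+1)^d * (\<alpha> * (3*\<delta>/r) powr s)^N)"

lemma radius_bound:
  assumes r: "r > 0"
  shows "\<exists>E \<in> sets (\<Omega> N). (\<forall>\<omega>\<in>space (\<Omega> N). ennreal r < W_N d N \<delta> \<omega> \<longrightarrow> \<omega> \<in> E) \<and>
           emeasure (\<Omega> N) E \<le> ennreal (bnd N r)"
proof (cases "r \<le> 4*\<delta>*A")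
  case True
  define \<eta> where "\<eta> = r/(2*A)"
  have eta: "\<eta> > 0" "\<eta> \<le> 2*\<delta>" using r True A_pos dpos by (auto simp: \<eta>_def field_simps)
  have dA: "0 < \<delta>*A" using A_pos dpos by simp
  have "r \<le> 8*\<delta>*A" using True dA by linarith
  then have "r/(8*\<delta>*A) \<le> 1" using dA by (simp add: divide_le_eq_1)
  then have q: "1 - r/(8*\<delta>*A) \<ge> 0" by simp
  have Qb: "emeasure M2 (Sset d \<delta> v \<eta>) \<le> ennreal (1 - r/(8*\<delta>*A))"
    if v: "v \<in> space (Rd d)" "norm_d d v = r" for v
  proof -
    have "measure \<mu> {\<phi> \<in> space \<mu>. \<bar>inner_d d v \<phi>\<bar> \<le> 2*\<eta>} \<le> \<alpha> * (2*\<eta>/r) powr s"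
      using eta r A_ge1 by (intro scaled_small[OF v r]) (auto simp: \<eta>_def field_simps)
    also have "2*\<eta>/r = 1/A" using r A_pos by (simp add: \<eta>_def field_simps)
    also have "\<alpha> * (1/A) powr s = 1/2"
      using A_pow A_pos alpha by (simp add: powr_divide)
    finally have sm: "measure \<mu> {\<phi> \<in> space \<mu>. \<bar>inner_d d v \<phi>\<bar> \<le> 2*\<eta>} \<le> 1/2" .
    have "emeasure M2 (Sset d \<delta> v \<eta>) \<le> ennreal (1 - \<eta>/(4*\<delta>))" by (rule Q_regime1[OF eta sm])
    also have "\<eta>/(4*\<delta>) = r/(8*\<delta>*A)" by (simp add: \<eta>_def field_simps)
    finally show ?thesis .
  qed
  have "2*r/\<eta> + 1 = 4*A+1" using r A_pos by (simp add: \<eta>_def field_simps)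
  then show ?thesis using generic_bound[OF r eta(1) q Qb, of N] True by (simp add: bnd_def)
next
  case False
  have eta: "\<delta> > 0" by (rule dpos)
  have q: "\<alpha> * (3*\<delta>/r) powr s \<ge> 0" using alpha by simp
  have "4*\<delta> \<le> 4*\<delta>*A" using A_ge1 dpos by simp
  then have r4: "3*\<delta> \<le> r" using False dpos by linarith
  have Qb: "emeasure M2 (Sset d \<delta> v \<delta>) \<le> ennreal (\<alpha> * (3*\<delta>/r) powr s)"
    if v: "v \<in> space (Rd d)" "norm_d d v = r" for v
  proof -
    have "emeasure M2 (Sset d \<delta> v \<delta>) \<le> ennreal (measure \<mu> {\<phi> \<in> space \<mu>. \<bar>inner_d d v \<phi>\<bar> \<le> 2*\<delta> + \<delta>})"
      using dpos by (intro Q_regime2) auto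
    also have "\<dots> \<le> ennreal (\<alpha> * (3*\<delta>/r) powr s)"
      using scaled_small[OF v r, of "3*\<delta>"] dpos r4 by (intro ennreal_leI) auto
    finally show ?thesis .
  qed
  show ?thesis using generic_bound[OF r eta q Qb, of N] False by (simp add: bnd_def)
qed

end


lemma telesc_sq: "(r0::real)\<^sup>2 + (\<Sum>k<n. 3 * (r0 * 2^k)\<^sup>2) = (r0 * 2^n)\<^sup>2"
  by (induction n) (simp_all add: power_mult_distrib algebra_simps)

lemma pointwise:
  fixes W :: ennreal and r0 :: real
  assumes r0: "r0 > 0"
    and E: "\<And>k. ennreal (r0 * 2^k) < W \<Longrightarrow> x \<in> E k"
  shows "W\<^sup>2 \<le> ennreal (r0\<^sup>2) + (\<Sum>k. ennreal (3 * (r0 * 2^k)\<^sup>2) * indicator (E k) x)"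
proof -
  let ?R = "ennreal (r0\<^sup>2) + (\<Sum>k. ennreal (3 * (r0 * 2^k)\<^sup>2) * indicator (E k) x)"
  have low: "ennreal ((r0 * 2^n)\<^sup>2) \<le> ?R" if all: "\<forall>k<n. x \<in> E k" for n
  proof -
    have "ennreal ((r0 * 2^n)\<^sup>2) = ennreal (r0\<^sup>2 + (\<Sum>k<n. 3 * (r0 * 2^k)\<^sup>2))"
      by (simp only: telesc_sq)
    also have "\<dots> = ennreal (r0\<^sup>2) + ennreal (\<Sum>k<n. 3 * (r0 * 2^k)\<^sup>2)"
      by (rule ennreal_plus) (auto intro: sum_nonneg)
    also have "ennreal (\<Sum>k<n. 3 * (r0 * 2^k)\<^sup>2) = (\<Sum>k<n. ennreal (3 * (r0 * 2^k)\<^sup>2))"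
      by (rule sum_ennreal[symmetric]) auto
    also have "(\<Sum>k<n. ennreal (3 * (r0 * 2^k)\<^sup>2)) = (\<Sum>k<n. ennreal (3 * (r0 * 2^k)\<^sup>2) * indicator (E k) x)"
      using all by (intro sum.cong) auto
    also have "\<dots> \<le> (\<Sum>k. ennreal (3 * (r0 * 2^k)\<^sup>2) * indicator (E k) x)"
      by (intro sum_le_suminf[OF summableI]) auto
    finally show ?thesis by (simp add: add_left_mono)
  qed
  show ?thesis
  proof (cases "\<exists>n. W \<le> ennreal (r0 * 2^n)")
    case True
    define n where "n = (LEAST n. W \<le> ennreal (r0 * 2^n))"
    have Wn: "W \<le> ennreal (r0 * 2^n)" unfolding n_def using True by (rule LeastI_ex)
    have "\<forall>k<n. x \<in> E k"
    proof (intro allI impI)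
      fix k assume "k < n"
      then have "\<not> W \<le> ennreal (r0 * 2^k)" unfolding n_def by (rule not_less_Least)
      then show "x \<in> E k" using E by (simp add: not_le)
    qed
    then have "ennreal ((r0 * 2^n)\<^sup>2) \<le> ?R" by (rule low)
    moreover have "W\<^sup>2 \<le> ennreal ((r0 * 2^n)\<^sup>2)"
      using Wn r0 by (simp add: ennreal_power[symmetric] power_mono)
    ultimately show ?thesis by order
  next
    case False
    then have "\<forall>k. x \<in> E k" using E by (simp add: not_le)
    then have lowall: "ennreal ((r0 * 2^n)\<^sup>2) \<le> ?R" for n using low by blast
    have "?R = \<top>"
    proof (rule ccontr)
      assume "?R \<noteq> \<top>"
      then obtain y where y: "?R = ennreal y" "y \<ge> 0" by (cases "?R") auto
      obtain n where n: "y < (r0 * 2^n)\<^sup>2"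
      proof -
        obtain n where "y / r0\<^sup>2 < 4^n" using real_arch_pow[of 4 "y / r0\<^sup>2"] by auto
        then have "y < r0\<^sup>2 * 4^n" using r0 by (simp add: field_simps)
        moreover have "(r0 * 2^n)\<^sup>2 = r0\<^sup>2 * 4^n"
        proof -
          have "((2::real)^n)\<^sup>2 = 2^(2*n)" by (rule power_even_eq[symmetric])
          also have "\<dots> = (2^2)^n" by (rule power_mult)
          finally have "((2::real)^n)\<^sup>2 = 4^n" by simp
          then show ?thesis by (simp add: power_mult_distrib)
        qed
        ultimately show ?thesis using that[of n] by simp
      qed
      have "ennreal ((r0 * 2^n)\<^sup>2) \<le> ennreal y" using lowall[of n] y by simp
      then have "(r0 * 2^n)\<^sup>2 \<le> y" using y by (simp add: ennreal_le_iff)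
      then show False using n by simp
    qed
    then show ?thesis by simp
  qed
qed


context Stp2 begin

lemma Omega_prob: "prob_space (\<Omega> N)"
  unfolding sample_law_def by (intro prob_space_PiM M2_prob)

lemma expect_bound:
  assumes r0: "r0 > 0"
  shows "(\<integral>\<^sup>+\<omega>. (W_N d N \<delta> \<omega>)\<^sup>2 \<partial>\<Omega> N) \<le> ennreal (r0\<^sup>2) + (\<Sum>k. ennreal (3 * (r0 * 2^k)\<^sup>2 * bnd N (r0 * 2^k)))"
proof -
  have "\<forall>k. \<exists>E. E \<in> sets (\<Omega> N) \<and> (\<forall>\<omega>\<in>space (\<Omega> N). ennreal (r0 * 2^k) < W_N d N \<delta> \<omega> \<longrightarrow> \<omega> \<in> E) \<and>
           emeasure (\<Omega> N) E \<le> ennreal (bnd N (r0 * 2^k))"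
    using radius_bound r0 by (metis zero_less_numeral zero_less_power mult_pos_pos)
  then obtain E where E: "\<And>k. E k \<in> sets (\<Omega> N)"
    "\<And>k. \<forall>\<omega>\<in>space (\<Omega> N). ennreal (r0 * 2^k) < W_N d N \<delta> \<omega> \<longrightarrow> \<omega> \<in> E k"
    "\<And>k. emeasure (\<Omega> N) (E k) \<le> ennreal (bnd N (r0 * 2^k))"
    by metis
  interpret O: prob_space "\<Omega> N" by (rule Omega_prob)
  have meas: "(\<lambda>x. ennreal (3 * (r0 * 2^k)\<^sup>2) * indicator (E k) x) \<in> borel_measurable (\<Omega> N)" for k
    using E(1)[of k] by measurable
  have "(\<integral>\<^sup>+\<omega>. (W_N d N \<delta> \<omega>)\<^sup>2 \<partial>\<Omega> N) \<le>
        (\<integral>\<^sup>+\<omega>. ennreal (r0\<^sup>2) + (\<Sum>k. ennreal (3 * (r0 * 2^k)\<^sup>2) * indicator (E k) \<omega>) \<partial>\<Omega> N)"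
    using E(2) by (intro nn_integral_mono pointwise[OF r0]) auto
  also have "\<dots> = (\<integral>\<^sup>+\<omega>. ennreal (r0\<^sup>2) \<partial>\<Omega> N) + (\<integral>\<^sup>+\<omega>. (\<Sum>k. ennreal (3 * (r0 * 2^k)\<^sup>2) * indicator (E k) \<omega>) \<partial>\<Omega> N)"
    using meas by (intro nn_integral_add) (auto intro!: borel_measurable_suminf)
  also have "(\<integral>\<^sup>+\<omega>. (\<Sum>k. ennreal (3 * (r0 * 2^k)\<^sup>2) * indicator (E k) \<omega>) \<partial>\<Omega> N)
      = (\<Sum>k. ennreal (3 * (r0 * 2^k)\<^sup>2) * emeasure (\<Omega> N) (E k))"
    using meas E(1) by (subst nn_integral_suminf) (auto simp: nn_integral_cmult_indicator)
  also have "(\<integral>\<^sup>+\<omega>. ennreal (r0\<^sup>2) \<partial>\<Omega> N) + (\<Sum>k. ennreal (3 * (r0 * 2^k)\<^sup>2) * emeasure (\<Omega> N) (E k))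
     \<le> (\<integral>\<^sup>+\<omega>. ennreal (r0\<^sup>2) \<partial>\<Omega> N) + (\<Sum>k. ennreal (3 * (r0 * 2^k)\<^sup>2 * bnd N (r0 * 2^k)))"
  proof (intro add_left_mono suminf_le summableI)
    fix k
    have "ennreal (3 * (r0 * 2^k)\<^sup>2) * emeasure (\<Omega> N) (E k) \<le> ennreal (3 * (r0 * 2^k)\<^sup>2) * ennreal (bnd N (r0 * 2^k))"
      using E(3) by (intro mult_left_mono) auto
    also have "\<dots> = ennreal (3 * (r0 * 2^k)\<^sup>2 * bnd N (r0 * 2^k))"
      by (rule ennreal_mult'[symmetric]) simp
    finally show "ennreal (3 * (r0 * 2^k)\<^sup>2) * emeasure (\<Omega> N) (E k) \<le> ennreal (3 * (r0 * 2^k)\<^sup>2 * bnd N (r0 * 2^k))" .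
  qed
  finally show ?thesis by (simp add: O.emeasure_space_1 add_left_mono)
qed

end


lemma two_pow_ge: "real k + 1 \<le> 2^k"
proof -
  have "k < 2^k" by (rule less_exp)
  then have "k + 1 \<le> (2::nat)^k" by (simp add: Suc_leI)
  then have "real (k + 1) \<le> real ((2::nat)^k)" by (rule of_nat_mono)
  then show ?thesis by simp
qed

context Stp2 begin

definition "g r0 k = min 1 (4*\<delta>*A / (r0 * 2^k))"

lemma g_mono: "r0 > 0 \<Longrightarrow> g r0 (Suc k) \<le> g r0 k"
  unfolding g_def using A_pos dpos
  by (intro min.mono order.refl divide_left_mono) (auto simp: field_simps)

lemma term_regime1:
  assumes N: "N > 0" and X: "X = real d * ln (5*A) + 3" and r0: "r0 = 8*\<delta>*A*X/N"
    and reg: "r0 * 2^k \<le> 4*\<delta>*A"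
  shows "3 * (r0 * 2^k)\<^sup>2 * bnd N (r0 * 2^k) \<le> 3 * r0\<^sup>2 * exp (-3) * (4 * exp (-3))^k"
proof -
  define r where "r = r0 * 2^k"
  have dA: "0 < \<delta>*A" using A_pos dpos by simp
  have lnA: "ln (5*A) \<ge> 0" using A_ge1 by simp
  have Xg: "X \<ge> 3" using X lnA by simp
  have r0p: "r0 > 0" using r0 Xg N dA by simp
  define x where "x = r/(8*\<delta>*A)"
  have x: "0 \<le> x" "x \<le> 1" using reg dA r0p by (auto simp: x_def r_def field_simps)
  have Nx: "real N * x = 2^k * X" using N dA A_pos dpos by (simp add: x_def r_def r0 field_simps)
  have "(1 - x)^N \<le> exp (-x)^N"
    using x by (intro power_mono) (auto simp: exp_ge_add_one_self[of "-x", simplified])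
  also have "\<dots> = exp (- (2^k * X))" by (simp add: exp_of_nat_mult[symmetric] Nx[symmetric])
  also have "\<dots> \<le> exp (- (X + 3*k))"
  proof -
    have "(2^k - 1) * 3 \<le> (2^k - 1) * X" using Xg two_pow_ge[of k] by (intro mult_left_mono) auto
    then have "X + 3 * k \<le> 2^k * X" using two_pow_ge[of k] by (simp add: algebra_simps)
    then show ?thesis by simp
  qed
  also have "\<dots> = exp (-3) * exp (-3 * k) / (5*A)^d"
  proof -
    have "exp (real d * ln (5*A)) = (5*A)^d" using A_pos by (simp add: exp_of_nat_mult)
    then have e: "exp (- (real d * ln (5*A))) = 1 / (5*A)^d" by (simp add: exp_minus inverse_eq_divide)
    have "- (X + 3 * real k) = (-3 + (-3 * real k)) + (- (real d * ln (5*A)))" by (simp add: X)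
    then have "exp (- (X + 3 * real k)) = exp (-3) * exp (-3 * real k) * exp (- (real d * ln (5*A)))"
      by (simp only: exp_add)
    then show ?thesis unfolding e by simp
  qed
  finally have e1: "(1 - x)^N \<le> exp (-3) * exp (-3 * k) / (5*A)^d" .
  have b: "bnd N r = (4*A+1)^d * (1 - x)^N" using reg by (simp add: bnd_def r_def x_def)
  have "(4*A+1)^d \<le> (5*A)^d" using A_ge1 by (intro power_mono) auto
  then have "bnd N r \<le> (5*A)^d * (exp (-3) * exp (-3 * k) / (5*A)^d)"
    unfolding b using e1 x A_pos by (intro mult_mono) auto
  also have "\<dots> = exp (-3) * exp (-3 * k)" using A_pos by simp
  finally have bb: "bnd N r \<le> exp (-3) * exp (-3 * k)" .
  have rr: "r\<^sup>2 = r0\<^sup>2 * 4^k"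
  proof -
    have "((2::real)^k)\<^sup>2 = 2^(2*k)" by (rule power_even_eq[symmetric])
    also have "\<dots> = (2^2)^k" by (rule power_mult)
    finally show ?thesis by (simp add: r_def power_mult_distrib)
  qed
  have "3 * r\<^sup>2 * bnd N r \<le> 3 * r\<^sup>2 * (exp (-3) * exp (-3 * k))"
    using bb by (intro mult_left_mono) auto
  also have "\<dots> = 3 * r0\<^sup>2 * exp (-3) * (4 * exp (-3))^k"
    by (simp add: rr power_mult_distrib exp_of_nat_mult[symmetric] mult.commute mult.left_commute)
  finally show ?thesis by (simp add: r_def)
qed


lemma term_regime2:
  assumes N: "N > 0" and r0: "r0 > 0" and reg: "\<not> r0 * 2^k \<le> 4*\<delta>*A"
    and sN: "s * real N \<ge> real d + 3"
  shows "3 * (r0 * 2^k)\<^sup>2 * bnd N (r0 * 2^k) \<le> 96 * \<delta>\<^sup>2 * A\<^sup>2 * (12*A)^d * (1/2)^N * (g r0 k - g r0 (Suc k))"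
proof -
  define r where "r = r0 * 2^k"
  have dA: "0 < \<delta>*A" using A_pos dpos by simp
  define \<rho> where "\<rho> = r/(4*\<delta>*A)"
  have rho1: "\<rho> > 1" using reg dA by (simp add: \<rho>_def r_def field_simps)
  have rpos: "r > 0" using rho1 dA by (simp add: \<rho>_def field_simps)
  have r_eq: "r = 4*\<delta>*A*\<rho>" using dA A_pos dpos by (simp add: \<rho>_def)
  have h4: "4*\<delta> \<le> 4*\<delta>*A" using A_ge1 dpos by simp
  have dr: "\<delta> \<le> r" using reg dpos h4 unfolding r_def by linarith
  have b: "bnd N r = (2*r/\<delta>+1)^d * (\<alpha> * (3*\<delta>/r) powr s)^N" using reg by (simp add: bnd_def r_def)
  have a1: "2*r/\<delta> + 1 \<le> 12*A*\<rho>"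
  proof -
    have "2*r/\<delta> + 1 \<le> 3*r/\<delta>" using dr dpos by (simp add: field_simps)
    also have "3*r/\<delta> = 12*A*\<rho>" using dpos A_pos by (simp add: r_eq field_simps)
    finally show ?thesis .
  qed
  have a2: "\<alpha> * (3*\<delta>/r) powr s \<le> \<rho> powr (-s) / 2"
  proof -
    have "(3*\<delta>/r) powr s \<le> (1/(A*\<rho>)) powr s"
      using dpos rpos spos A_pos rho1 by (intro powr_mono2) (auto simp: r_eq field_simps)
    also have "\<dots> = 1 / (A powr s * \<rho> powr s)"
      using A_pos rho1 by (simp add: powr_divide powr_mult)
    also have "\<dots> = 1 / (2*\<alpha> * \<rho> powr s)" by (simp add: A_pow)
    finally have "\<alpha> * (3*\<delta>/r) powr s \<le> \<alpha> * (1 / (2*\<alpha> * \<rho> powr s))"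
      using alpha by (intro mult_left_mono) auto
    also have "\<dots> = \<rho> powr (-s) / 2" using alpha rho1 by (simp add: powr_minus field_simps)
    finally show ?thesis .
  qed
  have "bnd N r \<le> (12*A*\<rho>)^d * (\<rho> powr (-s) / 2)^N"
    unfolding b using a1 a2 alpha dpos rpos A_pos rho1
    by (intro mult_mono power_mono) auto
  also have "\<dots> = (12*A)^d * (1/2)^N * (\<rho>^d * \<rho> powr (-s * N))"
  proof -
    have "(\<rho> powr (-s))^N = (\<rho> powr (-s)) powr (real N)"
      using rho1 by (intro powr_realpow[symmetric]) simp
    also have "\<dots> = \<rho> powr (-s * N)" by (rule powr_powr)
    finally have "(\<rho> powr (-s))^N = \<rho> powr (-s * N)" .
    then show ?thesis by (simp add: power_mult_distrib power_divide)
  qed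
  finally have bb: "bnd N r \<le> (12*A)^d * (1/2)^N * (\<rho>^d * \<rho> powr (-s * N))" .
  have pw: "\<rho>^2 * (\<rho>^d * \<rho> powr (-s * N)) \<le> 1/\<rho>"
  proof -
    have e2: "\<rho>^2 = \<rho> powr (real 2)" using rho1 by (intro powr_realpow[symmetric]) simp
    have ed: "\<rho>^d = \<rho> powr (real d)" using rho1 by (intro powr_realpow[symmetric]) simp
    have "\<rho>^2 * (\<rho>^d * \<rho> powr (-s * N)) = \<rho> powr (real 2) * (\<rho> powr (real d) * \<rho> powr (-s * N))"
      by (simp only: e2 ed)
    also have "\<dots> = \<rho> powr (real 2 + (real d + (-s * N)))" by (simp only: powr_add)
    also have "real 2 + (real d + (-s * N)) = real d + 2 - s * N" by simp
    finally have "\<rho>^2 * (\<rho>^d * \<rho> powr (-s * N)) = \<rho> powr (real d + 2 - s * N)" .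
    also have "\<dots> \<le> \<rho> powr (-1)" using rho1 sN by (intro powr_mono) auto
    also have "\<dots> = 1/\<rho>" using rho1 by (simp add: powr_minus inverse_eq_divide)
    finally show ?thesis .
  qed
  have gk: "g r0 k - g r0 (Suc k) = 1/(2*\<rho>)"
  proof -
    have "g r0 k = 1/\<rho>" using rho1 dA by (simp add: g_def \<rho>_def r_def[symmetric] min_def)
    moreover have "g r0 (Suc k) = 1/(2*\<rho>)"
    proof -
      have "r0 * 2^Suc k = 2*r" by (simp add: r_def)
      then show ?thesis using rho1 dA by (simp add: g_def \<rho>_def min_def field_simps)
    qed
    ultimately show ?thesis by (simp add: field_simps)
  qed
  have "3 * r\<^sup>2 * bnd N r \<le> 3 * r\<^sup>2 * ((12*A)^d * (1/2)^N * (\<rho>^d * \<rho> powr (-s * N)))"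
    using bb by (intro mult_left_mono) auto
  also have "\<dots> = 48 * \<delta>\<^sup>2 * A\<^sup>2 * (12*A)^d * (1/2)^N * (\<rho>^2 * (\<rho>^d * \<rho> powr (-s * N)))"
    by (simp add: r_eq power_mult_distrib)
  also have "\<dots> \<le> 48 * \<delta>\<^sup>2 * A\<^sup>2 * (12*A)^d * (1/2)^N * (1/\<rho>)"
    using pw A_pos by (intro mult_left_mono) auto
  also have "\<dots> = 96 * \<delta>\<^sup>2 * A\<^sup>2 * (12*A)^d * (1/2)^N * (g r0 k - g r0 (Suc k))"
    unfolding gk using rho1 by (simp add: field_simps)
  finally show ?thesis by (simp add: r_def)
qed

end


lemma exp1_ge2: "exp (1::real) \<ge> 2"
  using exp_ge_add_one_self[of 1] by simp

lemma ln16_ge2: "ln (16::real) \<ge> 2"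
proof -
  have "exp (2::real) = exp 1 ^ 2" by (simp add: exp_of_nat_mult[symmetric])
  also have "\<dots> \<le> 3^2" using exp_le by (intro power_mono) auto
  finally have "exp (2::real) \<le> 16" by simp
  then show ?thesis by (subst ln_ge_iff) auto
qed

lemma exp_sq_bound: "(x::real) \<ge> 0 \<Longrightarrow> x\<^sup>2 / 16 \<le> exp (x/2)"
proof -
  assume x: "x \<ge> 0"
  have "exp (real 2 * (x/4)) = exp (x/4)^2" by (rule exp_of_nat_mult)
  then have "exp (x/2) = exp (x/4)^2" by simp
  moreover have "x/4 \<le> exp (x/4)" using exp_ge_add_one_self[of "x/4"] by linarith
  then have "(x/4)^2 \<le> exp (x/4)^2" using x by (intro power_mono) auto
  ultimately show ?thesis by (simp add: power_divide)
qed

lemma r0_bound: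
  fixes \<delta> A :: real and d N :: nat
  assumes dl: "\<delta> > 0" and A: "A \<ge> 1" and d: "d \<ge> 1" and N: "N \<ge> 1"
  shows "(8*\<delta>*A*(real d * ln (5*A) + 3)/N)\<^sup>2 \<le> 576 * (\<delta>\<^sup>2 * A\<^sup>2 * (real d)\<^sup>2 * (ln (16*A))\<^sup>2) / (real N)\<^sup>2"
proof -
  define L where "L = ln (16*A)"
  have L2: "L \<ge> 2"
  proof -
    have "ln (16::real) \<le> ln (16*A)" using A by simp
    then show ?thesis using ln16_ge2 unfolding L_def by linarith
  qed
  have l5: "ln (5*A) \<le> L" "0 \<le> ln (5*A)" using A by (auto simp: L_def)
  have X: "real d * ln (5*A) + 3 \<le> 3 * real d * L"
  proof -
    have "real d * ln (5*A) \<le> real d * L" using l5 by (intro mult_left_mono) auto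
    moreover have "3 \<le> 2 * real d * L"
    proof -
      have h: "1 * 2 \<le> real d * L" using d L2 by (intro mult_mono) auto
      show ?thesis using h by (simp only: mult.assoc; linarith)
    qed
    ultimately show ?thesis by simp
  qed
  have X0: "0 \<le> real d * ln (5*A) + 3" using l5 by simp
  have "(8*\<delta>*A*(real d * ln (5*A) + 3)/N)\<^sup>2 = (8*\<delta>*A)\<^sup>2 * (real d * ln (5*A) + 3)\<^sup>2 / (real N)\<^sup>2"
    by (simp add: power_divide power_mult_distrib)
  also have "\<dots> \<le> (8*\<delta>*A)\<^sup>2 * (3 * real d * L)\<^sup>2 / (real N)\<^sup>2"
    using X X0 by (intro divide_right_mono mult_left_mono power_mono) auto
  also have "\<dots> = 576 * (\<delta>\<^sup>2 * A\<^sup>2 * (real d)\<^sup>2 * L\<^sup>2) / (real N)\<^sup>2"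
    by (simp add: power_mult_distrib)
  finally show ?thesis by (simp add: L_def)
qed

lemma K_bound:
  fixes A :: real and d N :: nat
  assumes A: "A \<ge> 1" and d: "d \<ge> 1" and N: "N \<ge> 1"
    and hN: "real N \<ge> 8 * real d * ln (32*A)"
  shows "(12*A)^d * (1/2)^N \<le> 16 / (real N)\<^sup>2"
proof -
  have "real d * ln (12*A) \<le> real d * ln (32*A)" using A by (intro mult_left_mono) auto
  then have a: "real d * ln (12*A) \<le> real N / 8" using hN by simp
  have "exp (real d * ln (12*A)) = exp (ln (12*A))^d" by (rule exp_of_nat_mult)
  then have "(12*A)^d = exp (real d * ln (12*A))" using A by simp
  also have "\<dots> \<le> exp (real N / 8)" using a by simp
  finally have e1: "(12*A)^d \<le> exp (real N / 8)" .
  have "exp (real N * ln 2) = exp (ln (2::real))^N" by (rule exp_of_nat_mult)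
  then have "exp (real N * ln 2) = 2^N" by simp
  then have "(1/2::real)^N = exp (- (real N * ln 2))"
    by (simp add: exp_minus power_one_over inverse_eq_divide)
  also have "\<dots> \<le> exp (- (real N * (2/3)))"
  proof -
    have "real N * (2/3) \<le> real N * ln 2" by (rule mult_left_mono[OF ln2_ge_two_thirds]) simp
    then show ?thesis by simp
  qed
  finally have e2: "(1/2::real)^N \<le> exp (- (real N * (2/3)))" .
  have "(12*A)^d * (1/2)^N \<le> exp (real N / 8) * exp (- (real N * (2/3)))"
    using e1 e2 by (intro mult_mono) auto
  also have "\<dots> = exp (real N / 8 - real N * (2/3))" by (simp add: exp_add[symmetric])
  also have "\<dots> \<le> exp (- (real N / 2))" by simp
  also have "\<dots> = 1 / exp (real N / 2)" by (simp add: exp_minus inverse_eq_divide)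
  also have "\<dots> \<le> 1 / ((real N)\<^sup>2 / 16)"
    using N exp_sq_bound[of "real N"] by (intro divide_left_mono) auto
  also have "\<dots> = 16 / (real N)\<^sup>2" by simp
  finally show ?thesis .
qed

lemma final_real:
  fixes \<delta> A :: real and d N :: nat
  assumes dl: "\<delta> > 0" and A: "A \<ge> 1" and d: "d \<ge> 1" and N: "N \<ge> 1"
    and hN: "real N \<ge> 8 * real d * ln (32*A)"
  shows "(8*\<delta>*A*(real d * ln (5*A) + 3)/N)\<^sup>2 + 3 * (8*\<delta>*A*(real d * ln (5*A) + 3)/N)\<^sup>2 / 4
          + 96 * \<delta>\<^sup>2 * A\<^sup>2 * (12*A)^d * (1/2)^N
        \<le> 10000 * \<delta>\<^sup>2 * (real d)\<^sup>2 * A\<^sup>2 * (ln (16*A))\<^sup>2 / ((real N + 1) * (real N + 2))"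
proof -
  define B where "B = \<delta>\<^sup>2 * A\<^sup>2 * (real d)\<^sup>2 * (ln (16*A))\<^sup>2"
  define r where "r = (8*\<delta>*A*(real d * ln (5*A) + 3)/N)\<^sup>2"
  have Npos: "real N > 0" using N by simp
  have L2: "ln (16*A) \<ge> 2"
  proof -
    have "ln (16::real) \<le> ln (16*A)" using A by simp
    then show ?thesis using ln16_ge2 by linarith
  qed
  have dL: "(real d)\<^sup>2 * (ln (16*A))\<^sup>2 \<ge> 4"
  proof -
    have "1 * 2 \<le> real d * ln (16*A)" using d L2 by (intro mult_mono) auto
    then have "2^2 \<le> (real d * ln (16*A))^2" by (intro power_mono) auto
    then show ?thesis by (simp add: power_mult_distrib)
  qed
  have B4: "4 * (\<delta>\<^sup>2 * A\<^sup>2) \<le> B" unfolding B_def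
    using dL mult_left_mono[OF dL, of "\<delta>\<^sup>2 * A\<^sup>2"] by (simp add: mult.assoc mult.commute mult.left_commute)
  have r: "r \<le> 576 * B / (real N)\<^sup>2" unfolding r_def B_def by (rule r0_bound[OF dl A d N])
  have "96 * \<delta>\<^sup>2 * A\<^sup>2 * ((12*A)^d * (1/2)^N) \<le> 96 * \<delta>\<^sup>2 * A\<^sup>2 * (16 / (real N)\<^sup>2)"
    using K_bound[OF A d N hN] by (rule mult_left_mono) simp
  then have "96 * \<delta>\<^sup>2 * A\<^sup>2 * (12*A)^d * (1/2)^N \<le> 96 * \<delta>\<^sup>2 * A\<^sup>2 * (16 / (real N)\<^sup>2)"
    by (simp only: mult.assoc)
  also have "\<dots> = 384 * (4 * (\<delta>\<^sup>2 * A\<^sup>2)) / (real N)\<^sup>2" by simp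
  also have "\<dots> \<le> 384 * B / (real N)\<^sup>2" by (intro divide_right_mono mult_left_mono B4) auto
  finally have K: "96 * \<delta>\<^sup>2 * A\<^sup>2 * (12*A)^d * (1/2)^N \<le> 384 * B / (real N)\<^sup>2" .
  define Q where "Q = B / (real N)\<^sup>2"
  have rQ: "r \<le> 576 * Q" using r by (simp add: Q_def)
  have KQ: "96 * \<delta>\<^sup>2 * A\<^sup>2 * (12*A)^d * (1/2)^N \<le> 384 * Q" using K by (simp add: Q_def)
  have "r + 3 * r / 4 + 96 * \<delta>\<^sup>2 * A\<^sup>2 * (12*A)^d * (1/2)^N \<le> 1392 * Q"
    using rQ KQ by linarith
  also have "\<dots> = 1392 * B / (real N)\<^sup>2" by (simp add: Q_def)
  also have "\<dots> \<le> 1392 * B * 6 / ((real N + 1) * (real N + 2))"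
  proof -
    have B0: "B \<ge> 0" unfolding B_def by simp
    have n1: "real N \<ge> 1" using N by simp
    have "(5 * real N + 2) * (real N - 1) \<ge> 0" using n1 by (intro mult_nonneg_nonneg) auto
    then have P6: "(real N + 1) * (real N + 2) \<le> 6 * (real N)\<^sup>2"
      by (simp add: algebra_simps power2_eq_square)
    have Pp: "(real N + 1) * (real N + 2) > 0" using Npos by simp
    have "1392 * B / (real N)\<^sup>2 = 1392 * B * 6 / (6 * (real N)\<^sup>2)" by simp
    also have "\<dots> \<le> 1392 * B * 6 / ((real N + 1) * (real N + 2))"
      using P6 Pp B0 Npos by (intro divide_left_mono) (auto intro!: mult_pos_pos)
    finally show ?thesis .
  qed
  also have "\<dots> \<le> 10000 * B / ((real N + 1) * (real N + 2))"
    using B4 Npos by (intro divide_right_mono) (auto simp: B_def)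
  finally show ?thesis unfolding r_def B_def by (simp add: mult.assoc mult.commute mult.left_commute)
qed


context Stp2 begin

lemma main_bound:
  assumes hN: "real N \<ge> 8 * real d * ln (32*A)"
  shows "(\<integral>\<^sup>+\<omega>. (W_N d N \<delta> \<omega>)\<^sup>2 \<partial>\<Omega> N)
     \<le> ennreal (10000 * \<delta>\<^sup>2 * (real d)\<^sup>2 * A\<^sup>2 * (ln (16*A))\<^sup>2 / ((real N + 1) * (real N + 2)))"
proof -
  have l32: "ln (32*A) > 0" using A_ge1 by simp
  have Npos: "real N > 0" using hN l32 d1
    by (smt (verit) mult_pos_pos of_nat_0_less_iff of_nat_le_0_iff le_less_trans linorder_not_le zero_less_one le_numeral_extra(3) Suc_le_eq)
  then have N1: "N \<ge> 1" and N0: "N > 0" by auto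
  have sN: "s * real N \<ge> real d + 3"
  proof -
    have lnA: "s * ln A = ln (2*\<alpha>)" using spos alpha by (simp add: A_def ln_powr)
    have "ln (2::real) \<le> ln (2*\<alpha>)" using alpha by simp
    then have "2/3 \<le> s * ln A" using lnA ln2_ge_two_thirds by linarith
    moreover have "s * ln A \<le> s * ln (32*A)" using spos A_pos by (intro mult_left_mono) auto
    ultimately have s32: "2/3 \<le> s * ln (32*A)" by linarith
    have "s * real N \<ge> s * (8 * real d * ln (32*A))" using hN spos by (intro mult_left_mono) auto
    also have "s * (8 * real d * ln (32*A)) = 8 * real d * (s * ln (32*A))" by (simp add: algebra_simps)
    also have "\<dots> \<ge> 8 * real d * (2/3)" using s32 by (intro mult_left_mono) auto
    finally have "s * real N \<ge> 8 * real d * (2/3)" .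
    then show ?thesis using d1 by simp
  qed
  define X where "X = real d * ln (5*A) + 3"
  define r0 where "r0 = 8*\<delta>*A*X/N"
  have X3: "X \<ge> 3" using A_ge1 by (simp add: X_def)
  have r0p: "r0 > 0" using X3 A_pos dpos Npos by (simp add: r0_def)
  define K where "K = 96 * \<delta>\<^sup>2 * A\<^sup>2 * (12*A)^d * (1/2::real)^N"
  have K0: "K \<ge> 0" using A_pos by (simp add: K_def)
  define T1 where "T1 k = 3 * r0\<^sup>2 / 8 * (1/2::real)^k" for k
  define T2 where "T2 k = K * (g r0 k - g r0 (Suc k))" for k
  have T1p: "T1 k \<ge> 0" for k by (simp add: T1_def)
  have T2p: "T2 k \<ge> 0" for k using K0 g_mono[OF r0p, of k] by (simp add: T2_def)
  have e3: "exp (-3::real) \<le> 1/8"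
  proof -
    have "exp (3::real) = exp 1 ^ 3" by (simp add: exp_of_nat_mult[symmetric])
    also have "\<dots> \<ge> 2^3" using exp1_ge2 by (intro power_mono) auto
    finally have "exp (3::real) \<ge> 8" by simp
    then show ?thesis by (simp add: exp_minus inverse_eq_divide)
  qed
  have tb: "3 * (r0 * 2^k)\<^sup>2 * bnd N (r0 * 2^k) \<le> T1 k + T2 k" for k
  proof (cases "r0 * 2^k \<le> 4*\<delta>*A")
    case True
    have "3 * (r0 * 2^k)\<^sup>2 * bnd N (r0 * 2^k) \<le> 3 * r0\<^sup>2 * exp (-3) * (4 * exp (-3))^k"
      by (rule term_regime1[OF N0 X_def r0_def True])
    also have "\<dots> \<le> 3 * r0\<^sup>2 * (1/8) * (1/2)^k"
    proof -
      have "4 * exp (-3::real) \<le> 1/2" using e3 by simp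
      then have "(4 * exp (-3::real))^k \<le> (1/2)^k" by (intro power_mono) auto
      then show ?thesis using e3 by (intro mult_mono mult_left_mono) auto
    qed
    also have "\<dots> = T1 k" by (simp add: T1_def)
    finally show ?thesis using T2p[of k] by linarith
  next
    case False
    have "3 * (r0 * 2^k)\<^sup>2 * bnd N (r0 * 2^k) \<le> T2 k"
      unfolding T2_def K_def by (rule term_regime2[OF N0 r0p False sN])
    then show ?thesis using T1p[of k] by linarith
  qed
  have s1: "(\<Sum>k. ennreal (T1 k)) \<le> ennreal (3 * r0\<^sup>2 / 4)"
  proof -
    have sm: "summable T1" unfolding T1_def by (intro summable_mult summable_geometric) auto
    have "(\<Sum>k. ennreal (T1 k)) = ennreal (\<Sum>k. T1 k)" by (rule suminf_ennreal2[OF T1p sm])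
    also have "(\<Sum>k. T1 k) = 3 * r0\<^sup>2 / 8 * 2"
      unfolding T1_def by (subst suminf_mult) (auto simp: suminf_geometric)
    finally show ?thesis by simp
  qed
  have s2: "(\<Sum>k. ennreal (T2 k)) \<le> ennreal K"
  proof (rule suminf_le_const[OF summableI])
    fix n
    have "(\<Sum>k<n. ennreal (T2 k)) = ennreal (\<Sum>k<n. T2 k)" using T2p by (simp add: sum_nonneg)
    also have "(\<Sum>k<n. T2 k) = K * (g r0 0 - g r0 n)"
      unfolding T2_def by (simp add: sum_distrib_left[symmetric] sum_lessThan_telescope')
    also have "\<dots> \<le> K * 1"
    proof -
      have "g r0 0 \<le> 1" "g r0 n \<ge> 0" using r0p A_pos dpos by (auto simp: g_def)
      then show ?thesis using K0 by (intro mult_left_mono) auto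
    qed
    finally show "(\<Sum>k<n. ennreal (T2 k)) \<le> ennreal K" by (simp add: ennreal_leI)
  qed
  have "(\<integral>\<^sup>+\<omega>. (W_N d N \<delta> \<omega>)\<^sup>2 \<partial>\<Omega> N) \<le> ennreal (r0\<^sup>2) + (\<Sum>k. ennreal (3 * (r0 * 2^k)\<^sup>2 * bnd N (r0 * 2^k)))"
    by (rule expect_bound[OF r0p])
  also have "(\<Sum>k. ennreal (3 * (r0 * 2^k)\<^sup>2 * bnd N (r0 * 2^k))) \<le> (\<Sum>k. ennreal (T1 k) + ennreal (T2 k))"
    using tb T1p T2p by (intro suminf_le summableI) (simp add: ennreal_plus[symmetric] ennreal_leI del: ennreal_plus)
  also have "\<dots> = (\<Sum>k. ennreal (T1 k)) + (\<Sum>k. ennreal (T2 k))"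
    by (rule suminf_add[OF summableI summableI, symmetric])
  also have "\<dots> \<le> ennreal (3 * r0\<^sup>2 / 4) + ennreal K" using s1 s2 by (rule add_mono)
  finally have "(\<integral>\<^sup>+\<omega>. (W_N d N \<delta> \<omega>)\<^sup>2 \<partial>\<Omega> N) \<le> ennreal (r0\<^sup>2) + (ennreal (3 * r0\<^sup>2 / 4) + ennreal K)"
    by (simp add: add_left_mono)
  also have "\<dots> = ennreal (r0\<^sup>2 + 3 * r0\<^sup>2 / 4 + K)" using K0 by (simp add: ennreal_plus[symmetric] del: ennreal_plus)
  also have "\<dots> \<le> ennreal (10000 * \<delta>\<^sup>2 * (real d)\<^sup>2 * A\<^sup>2 * (ln (16*A))\<^sup>2 / ((real N + 1) * (real N + 2)))"
    using final_real[OF dpos A_ge1 d1 N1 hN] unfolding r0_def X_def K_def by (intro ennreal_leI) (simp add: algebra_simps)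
  finally show ?thesis .
qed

end
lemma key_case:
  fixes d :: nat and \<delta> :: real and \<mu> :: "(nat \<Rightarrow> real) measure" and \<alpha> s :: real and N :: nat
  assumes d1: "d \<ge> 1" and dpos: "\<delta> > 0" and P: "prob_space \<mu>" and sets_mu: "sets \<mu> = sets (Rd d)"
    and AEs: "AE v in \<mu>. v \<in> sphere_d d" and alpha: "\<alpha> \<ge> 1" and spos: "s > 0"
    and SB: "\<forall>x \<in> sphere_d d. \<forall>t \<in> {0..1}. measure \<mu> {v \<in> space \<mu>. \<bar>inner_d d x v\<bar> \<le> t} \<le> \<alpha> * t powr s"
    and hN: "real N \<ge> 8 * real d * ln (32 * (2 * \<alpha>) powr (1 / s))"
  shows "(\<integral>\<^sup>+ \<omega>. (W_N d N \<delta> \<omega>)\<^sup>2 \<partial>sample_law N \<mu> \<delta>)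
      \<le> ennreal (10000 * \<delta>\<^sup>2 * (real d)\<^sup>2 * (2 * \<alpha>) powr (2 / s)
                 * (ln (16 * (2 * \<alpha>) powr (1 / s)))\<^sup>2
                 / ((real N + 1) * (real N + 2)))"
proof -
  interpret Stp2 d \<delta> \<mu> \<alpha> s
    by (intro Stp2.intro Stp.intro Stp2_axioms.intro d1 dpos P sets_mu AEs alpha spos SB)
  have hN': "real N \<ge> 8 * real d * ln (32*A)" using hN by (simp add: A_def)
  have "A^2 = A powr (real 2)" using A_pos by (intro powr_realpow[symmetric])
  also have "\<dots> = (2*\<alpha>) powr (1/s * real 2)" unfolding A_def by (rule powr_powr)
  also have "1/s * real 2 = 2/s" by simp
  finally have A2: "A\<^sup>2 = (2*\<alpha>) powr (2/s)" .
  show ?thesis using main_bound[OF hN'] unfolding A2 by (simp add: A_def)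
qed

theorem corollary5p6:
  shows "\<exists>c1>0. \<exists>c2>0. \<forall>(d::nat) (\<delta>::real) (\<mu>::(nat \<Rightarrow> real) measure) (\<alpha>::real) (s::real) (N::nat).
    d \<ge> 1 \<and> \<delta> > 0 \<and> prob_space \<mu> \<and> sets \<mu> = sets (Rd d) \<and>
    (AE v in \<mu>. v \<in> sphere_d d) \<and>
    \<alpha> \<ge> 1 \<and> s > 0 \<and>
    (\<forall>x \<in> sphere_d d. \<forall>t \<in> {0..1}.
        measure \<mu> {v \<in> space \<mu>. \<bar>inner_d d x v\<bar> \<le> t} \<le> \<alpha> * t powr s) \<and>
    real N \<ge> c2 * real d * ln (32 * (2 * \<alpha>) powr (1 / s))
    \<longrightarrow>
    (\<integral>\<^sup>+ \<omega>. (W_N d N \<delta> \<omega>)\<^sup>2 \<partial>sample_law N \<mu> \<delta>)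
      \<le> ennreal (c1 * \<delta>\<^sup>2 * (real d)\<^sup>2 * (2 * \<alpha>) powr (2 / s)
                 * (ln (16 * (2 * \<alpha>) powr (1 / s)))\<^sup>2
                 / ((real N + 1) * (real N + 2)))"
proof -
  show ?thesis
    apply (rule exI[of _ "10000::real"])
    apply (rule conjI, simp)
    apply (rule exI[of _ "8::real"])
    apply (rule conjI, simp)
    using key_case by blast
qed


end
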